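(* Let $\lambda\mapsto|\psi_\lambda\rangle\in\mathbb{C}^N$ be a twice continuously differentiable curve of unit vectors, and let $\rho_\lambda=|\psi_\lambda\rangle\langle\psi_\lambda|$. At a fixed $\lambda$ put $|0\rangle=|\psi_\lambda\rangle$, $|v\rangle=\partial_\lambda|\psi_\lambda\rangle$ and $|v^\perp\rangle=|v\rangle-\langle 0|v\rangle|0\rangle$, and assume $|v^\perp\rangle\neq0$. Let $\mathcal{B}^\lambda_\alpha$ be any orthonormal basis of $\mathbb{C}^N$ that contains the two vectors $|\pm\rangle=\frac{1}{\sqrt2}\big(|0\rangle\pm|v^\perp\rangle/\langle v^\perp|v^\perp\rangle^{1/2}\big)$. Equivalently, $\mathcal{B}^\lambda_\alpha$ is any orthonormal eigenbasis of the SLD $L_\lambda=2(|v\rangle\langle0|+|0\rangle\langle v|)$. Then $$-\Big[\partial^2_{\delta\lambda}\,\mathrm{Coh}_{\mathcal{B}^\lambda_\alpha}(\rho_{\lambda+\delta\lambda})\Big]_{\delta\lambda=0}=4g^{FS}_\lambda.$$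
   Context: All logarithms are natural logarithms. For an orthonormal basis $\mathcal{B}=\{|x\rangle\}$, the relative entropy of coherence of $\mathcal{B}$ with respect to $\rho$ is $\mathrm{Coh}_{\mathcal{B}}(\rho)=-\mathcal{V}(\rho)+H(p)$. Here $p_x=\langle x|\rho|x\rangle$, $\mathcal{V}$ is the von Neumann entropy and $H$ is the Shannon entropy. The Fubini–Study metric is $g^{FS}_\lambda=\langle v|v\rangle-|\langle v|0\rangle|^2=\langle v^\perp|v^\perp\rangle$. Equivalently, $4g^{FS}_\lambda$ equals the quantum Fisher information of the pure-state family at $\lambda$. *)

theory Defs
  imports "HOL-Analysis.Analysis"
begin

text \<open>Vectors of C^N are modelled as complex ^ 'n with N = CARD('n).
  Hermitian inner product, conjugate-linear in the first argument (bra-ket).\<close>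
definition cinner :: "complex ^ 'n \<Rightarrow> complex ^ 'n \<Rightarrow> complex" where
  "cinner x y = (\<Sum>i\<in>UNIV. cnj (x $ i) * y $ i)"

text \<open>Orthonormal family indexed by 'n (N vectors in C^N: an orthonormal basis).\<close>
definition orthonormal_basis :: "('n \<Rightarrow> complex ^ 'n) \<Rightarrow> bool" where
  "orthonormal_basis e \<longleftrightarrow> (\<forall>i j. cinner (e i) (e j) = (if i = j then 1 else 0))"

definition proj :: "complex ^ 'n \<Rightarrow> complex ^ 'n ^ 'n" where
  "proj \<psi> = (\<chi> i j. \<psi> $ i * cnj (\<psi> $ j))"

text \<open>Shannon-type entropy term  -x ln x  (equal to 0 at x = 0).\<close>
definition entr :: "real \<Rightarrow> real" where
  "entr x = - x * ln x"

definition vn_entropy :: "complex ^ 'n ^ 'n \<Rightarrow> real" where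
  "vn_entropy \<rho> = (THE s. \<exists>e \<mu>. orthonormal_basis e \<and>
      (\<forall>i. \<rho> *v e i = complex_of_real (\<mu> i) *s e i) \<and> s = (\<Sum>i\<in>UNIV. entr (\<mu> i)))"

definition shannon_in_basis :: "('n \<Rightarrow> complex ^ 'n) \<Rightarrow> complex ^ 'n ^ 'n \<Rightarrow> real" where
  "shannon_in_basis b \<rho> = (\<Sum>i\<in>UNIV. entr (Re (cinner (b i) (\<rho> *v b i))))"

definition coh :: "('n \<Rightarrow> complex ^ 'n) \<Rightarrow> complex ^ 'n ^ 'n \<Rightarrow> real" where
  "coh b \<rho> = - vn_entropy \<rho> + shannon_in_basis b \<rho>"

definition fubini_study :: "complex ^ 'n \<Rightarrow> complex ^ 'n \<Rightarrow> real" where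
  "fubini_study \<psi>0 v = Re (cinner v v) - (cmod (cinner v \<psi>0))\<^sup>2"

end

theory Submission
  imports Defs "HOL-Analysis.Analysis" "HOL-Real_Asymp.Real_Asymp"
begin



lemma cinner_add_right: "cinner x (y + z) = cinner x y + cinner x z"
  by (simp add: cinner_def distrib_left sum.distrib)
lemma cinner_add_left: "cinner (x + y) z = cinner x z + cinner y z"
  by (simp add: cinner_def distrib_right sum.distrib)
lemma cinner_diff_right: "cinner x (y - z) = cinner x y - cinner x z"
  by (simp add: cinner_def right_diff_distrib sum_subtractf)
lemma cinner_diff_left: "cinner (x - y) z = cinner x z - cinner y z"
  by (simp add: cinner_def left_diff_distrib sum_subtractf)
lemma cinner_scaleC_right: "cinner x (c *s y) = c * cinner x y"
  by (simp add: cinner_def sum_distrib_left mult.left_commute)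
lemma cinner_scaleC_left: "cinner (c *s x) y = cnj c * cinner x y"
  by (simp add: cinner_def sum_distrib_left mult.assoc)
lemma cinner_scaleR_right: "cinner x (r *\<^sub>R y) = complex_of_real r * cinner x y"
  by (simp add: cinner_def sum_distrib_left) (simp add: scaleR_conv_of_real mult.left_commute)
lemma cinner_scaleR_left: "cinner (r *\<^sub>R x) y = complex_of_real r * cinner x y"
  by (simp add: cinner_def sum_distrib_left) (simp add: scaleR_conv_of_real mult.assoc)
lemma cinner_commute: "cnj (cinner x y) = cinner y x"
  by (simp add: cinner_def mult.commute)
lemma cinner_zero_right[simp]: "cinner x 0 = 0"
  by (simp add: cinner_def)
lemma cinner_zero_left[simp]: "cinner 0 x = 0"
  by (simp add: cinner_def)
lemma cinner_self: "cinner x x = complex_of_real (\<Sum>i\<in>UNIV. (cmod (x $ i))\<^sup>2)"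
  unfolding cinner_def of_real_sum
  apply (rule sum.cong, simp) using complex_norm_square by (metis mult.commute)
lemma cinner_self_Re: "Re (cinner x x) = (\<Sum>i\<in>UNIV. (cmod (x $ i))\<^sup>2)"
  by (simp add: cinner_self)
lemma cinner_self_Im[simp]: "Im (cinner x x) = 0"
  by (simp add: cinner_self)
lemma cinner_self_nonneg: "Re (cinner x x) \<ge> 0"
  by (simp add: cinner_self_Re sum_nonneg)
lemma cinner_self_eq_0: "cinner x x = 0 \<longleftrightarrow> x = 0"
proof
  assume "cinner x x = 0"
  then have "(\<Sum>i\<in>UNIV. (cmod (x $ i))\<^sup>2) = 0" using cinner_self[of x] by (metis of_real_eq_0_iff)
  then have "\<forall>i\<in>UNIV. (cmod (x $ i))\<^sup>2 = 0" by (subst (asm) sum_nonneg_eq_0_iff) auto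
  then show "x = 0" by (simp add: vec_eq_iff)
qed simp

lemma lin_deriv:
  fixes L :: "complex ^ 'n \<Rightarrow> real"
  assumes "linear L" "(g has_vector_derivative g') F"
  shows "((\<lambda>s. L (g s)) has_real_derivative L g') F"
proof -
  have "bounded_linear L" using assms(1) linear_conv_bounded_linear by blast
  then show ?thesis using bounded_linear.has_vector_derivative[OF _ assms(2)]
    by (simp add: has_real_derivative_iff_has_vector_derivative)
qed

lemma linear_Re_cinner: "linear (\<lambda>x. Re (cinner c x))"
  by (rule linearI) (simp_all add: cinner_add_right cinner_scaleR_right)
lemma linear_Im_cinner: "linear (\<lambda>x. Im (cinner c x))"
  by (rule linearI) (simp_all add: cinner_add_right cinner_scaleR_right)
lemma linear_Re_comp: "linear (\<lambda>x::complex^'n. Re (x $ m))"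
  by (rule linearI) simp_all
lemma linear_Im_comp: "linear (\<lambda>x::complex^'n. Im (x $ m))"
  by (rule linearI) simp_all


lemma proj_mult: "proj u *v x = cinner u x *s u"
  by (simp add: proj_def matrix_vector_mult_def cinner_def vec_eq_iff sum_distrib_left sum_distrib_right mult_ac)



lemma householder_unitary:
  fixes w :: "complex ^ 'n"
  assumes "w \<noteq> 0"
  defines "H \<equiv> (\<lambda>z. z - (2 * cinner w z / cinner w w) *s w)"
  shows "cinner (H p) (H q) = cinner p q"
proof -
  define k where "k = cinner w w"
  have k0: "k \<noteq> 0" using assms(1) by (simp add: k_def cinner_self_eq_0)
  have kc: "cnj k = k" using cinner_commute[of w w] k_def by simp
  define a where "a = 2 * cinner w p / k"
  define c where "c = 2 * cinner w q / k"
  have "cinner (H p) (H q) = cinner p q - c * cinner p w - cnj a * cinner w q + cnj a * c * k"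
    unfolding H_def k_def[symmetric] a_def[symmetric] c_def[symmetric]
    by (simp only: cinner_diff_left cinner_diff_right cinner_scaleC_left cinner_scaleC_right k_def) (simp add: algebra_simps)
  also have "cnj a = 2 * cinner p w / k" unfolding a_def using kc by (simp add: cinner_commute)
  finally show ?thesis using k0 unfolding c_def by (simp add: field_simps)
qed


lemma eigen_from_basis:
  assumes onb: "orthonormal_basis e" and ei: "e i0 = ph *s u" and ph: "cnj ph * ph = 1"
    and uu: "cinner u u = 1"
  shows "\<forall>k. proj u *v e k = complex_of_real (if k = i0 then 1 else 0) *s e k"
proof
  fix k
  show "proj u *v e k = complex_of_real (if k = i0 then 1 else 0) *s e k"
  proof (cases "k = i0")
    case True
    then show ?thesis using ei uu by (simp add: proj_mult cinner_scaleC_right vector_smult_assoc)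
  next
    case False
    have "cinner (e i0) (e k) = 0" using onb False unfolding orthonormal_basis_def by metis
    then have "cnj ph * cinner u (e k) = 0" using ei by (simp add: cinner_scaleC_left)
    then have "cinner u (e k) = 0" using ph by auto
    then show ?thesis using False by (simp add: proj_mult)
  qed
qed

lemma vn_pure:
  fixes u :: "complex ^ 'n" and b :: "'n \<Rightarrow> complex ^ 'n"
  assumes uu: "cinner u u = 1" and onb: "orthonormal_basis b"
  shows "vn_entropy (proj u) = 0"
  unfolding vn_entropy_def
proof (rule the_equality)
  obtain i0 :: 'n where True by simp
  define x where "x = b i0"
  define c where "c = cinner x u"
  define ph where "ph = (if c = 0 then 1 else cnj c / complex_of_real (cmod c))"
  define y where "y = ph *s u"
  have xx: "cinner x x = 1" using onb unfolding orthonormal_basis_def x_def by simp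
  have phn: "cmod ph = 1" unfolding ph_def by (simp add: norm_divide)
  have ph1: "cnj ph * ph = 1"
    using complex_norm_square[of ph] phn by (simp add: mult.commute)
  have yy: "cinner y y = 1" using ph1 uu by (simp add: y_def cinner_scaleC_left cinner_scaleC_right mult.commute)
  have xy: "cinner x y = complex_of_real (cmod c)"
    unfolding y_def ph_def c_def
    by (auto simp: cinner_scaleC_right complex_norm_square[symmetric] power2_eq_square field_simps
        complex_mult_cnj[symmetric] mult.commute)
  have ent: "(\<Sum>k\<in>UNIV. entr (if k = i0 then 1 else 0)) = 0"
    by (rule sum.neutral) (simp add: entr_def)
  show "\<exists>e \<mu>. orthonormal_basis e \<and>
      (\<forall>i. proj u *v e i = complex_of_real (\<mu> i) *s e i) \<and> 0 = (\<Sum>i\<in>UNIV. entr (\<mu> i))"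
  proof (cases "x = y")
    case True
    then have "b i0 = ph *s u" using x_def y_def by simp
    from eigen_from_basis[OF onb this ph1 uu] onb ent show ?thesis by metis
  next
    case False
    define w where "w = x - y"
    have w0: "w \<noteq> 0" using False w_def by simp
    define H where "H = (\<lambda>z. z - (2 * cinner w z / cinner w w) *s w)"
    have Hu: "\<And>p q. cinner (H p) (H q) = cinner p q"
      unfolding H_def by (rule householder_unitary[OF w0])
    have onb2: "orthonormal_basis (\<lambda>k. H (b k))"
      using onb Hu unfolding orthonormal_basis_def by simp
    have yx: "cinner y x = complex_of_real (cmod c)"
      using xy cinner_commute[of x y] by simp
    have ww: "cinner w w = 2 - 2 * complex_of_real (cmod c)"
      unfolding w_def using xx yy xy yx by (simp add: cinner_diff_left cinner_diff_right)
    have wx: "cinner w x = 1 - complex_of_real (cmod c)"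
      unfolding w_def using xx yx by (simp add: cinner_diff_left)
    have "cinner w w \<noteq> 0" using w0 by (simp add: cinner_self_eq_0)
    moreover have "cinner w w = 2 * cinner w x" unfolding ww wx by (simp add: algebra_simps)
    ultimately have "2 * cinner w x / cinner w w = 1" by simp
    then have "H (b i0) = y" unfolding H_def x_def[symmetric] w_def by simp
    then have "H (b i0) = ph *s u" using y_def by simp
    from eigen_from_basis[OF onb2 this ph1 uu] onb2 ent show ?thesis by metis
  qed
next
  fix s
  assume "\<exists>e \<mu>. orthonormal_basis e \<and>
      (\<forall>i. proj u *v e i = complex_of_real (\<mu> i) *s e i) \<and> s = (\<Sum>i\<in>UNIV. entr (\<mu> i))"
  then obtain e \<mu> where onbe: "orthonormal_basis e"
    and eig: "\<forall>i. proj u *v e i = complex_of_real (\<mu> i) *s e i" and s: "s = (\<Sum>i\<in>UNIV. entr (\<mu> i))"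
    by blast
  have "entr (\<mu> i) = 0" for i
  proof -
    have zz: "cinner (e i) (e i) = 1" using onbe unfolding orthonormal_basis_def by simp
    have eq: "cinner u (e i) *s u = complex_of_real (\<mu> i) *s e i" using eig proj_mult by metis
    then have "cinner u (cinner u (e i) *s u) = cinner u (complex_of_real (\<mu> i) *s e i)" by simp
    then have A: "cinner u (e i) = complex_of_real (\<mu> i) * cinner u (e i)"
      using uu by (simp add: cinner_scaleC_right)
    show ?thesis
    proof (cases "cinner u (e i) = 0")
      case True
      then have "cinner (e i) (complex_of_real (\<mu> i) *s e i) = 0" using eq by (metis cinner_scaleC_right mult_zero_left)
      then have "\<mu> i = 0" using zz by (simp add: cinner_scaleC_right)
      then show ?thesis by (simp add: entr_def)
    next
      case False
      then have "\<mu> i = 1" using A by (metis mult_cancel_right2 of_real_eq_1_iff)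
      then show ?thesis by (simp add: entr_def)
    qed
  qed
  then show "s = 0" using s by simp
qed




lemma phi_at_right: "((\<lambda>x::real. sqrt x * (\<bar>ln x\<bar> + 1)) \<longlongrightarrow> 0) (at_right 0)"
proof -
  have A: "((\<lambda>x::real. sqrt x * (- ln x + 1)) \<longlongrightarrow> 0) (at_right 0)" by real_asymp
  have B: "eventually (\<lambda>x::real. sqrt x * (- ln x + 1) = sqrt x * (\<bar>ln x\<bar> + 1)) (at_right 0)"
  proof -
    have "eventually (\<lambda>x::real. x < 1 \<and> x > 0) (at_right 0)"
      unfolding eventually_at_right[OF zero_less_one] by (intro exI[of _ 1]) simp
    then show ?thesis by eventually_elim simp
  qed
  show ?thesis unfolding tendsto_cong[OF B, symmetric] by (rule A)
qed

lemma phi_tendsto: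
  fixes g :: "'a \<Rightarrow> real"
  assumes "(g \<longlongrightarrow> 0) F" "eventually (\<lambda>x. g x \<ge> 0) F"
  shows "((\<lambda>x. sqrt (g x) * (\<bar>ln (g x)\<bar> + 1)) \<longlongrightarrow> 0) F"
proof -
  have "continuous (at 0 within {0..}) (\<lambda>x::real. sqrt x * (\<bar>ln x\<bar> + 1))"
    unfolding continuous_within at_within_Ici_at_right using phi_at_right by simp
  from continuous_within_tendsto_compose[OF this _ assms(1)] assms(2)
  show ?thesis by simp
qed


lemma abs_le_sqrt_sum: "\<bar>x::real\<bar> \<le> sqrt (x\<^sup>2 + y\<^sup>2)" "\<bar>y::real\<bar> \<le> sqrt (x\<^sup>2 + y\<^sup>2)"
  using real_sqrt_sum_squares_ge1[of "\<bar>x\<bar>" y] real_sqrt_sum_squares_ge2[of x "\<bar>y\<bar>"] by simp_all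

lemma sqrt_sum_le: "sqrt ((x::real)\<^sup>2 + y\<^sup>2) \<le> \<bar>x\<bar> + \<bar>y\<bar>"
proof -
  have "x\<^sup>2 + y\<^sup>2 \<le> (\<bar>x\<bar> + \<bar>y\<bar>)\<^sup>2" by (simp add: power2_eq_square algebra_simps)
  then have "sqrt (x\<^sup>2 + y\<^sup>2) \<le> sqrt ((\<bar>x\<bar> + \<bar>y\<bar>)\<^sup>2)" by (rule real_sqrt_le_mono)
  then show ?thesis by simp
qed

lemma entr_bound:
  fixes P S :: real
  assumes "P \<ge> 0" "sqrt P \<le> S"
  shows "\<bar>entr P\<bar> \<le> sqrt P * (\<bar>ln P\<bar> + 1) * S"
proof -
  have S0: "0 \<le> S" using assms(2) real_sqrt_ge_zero[OF assms(1)] by linarith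
  have "\<bar>entr P\<bar> = sqrt P * sqrt P * \<bar>ln P\<bar>" using assms(1) by (simp add: entr_def abs_mult)
  also have "\<dots> \<le> sqrt P * S * \<bar>ln P\<bar>"
    by (intro mult_right_mono mult_left_mono assms(2)) (simp_all add: assms(1))
  also have "\<dots> \<le> sqrt P * S * (\<bar>ln P\<bar> + 1)"
    using S0 assms(1) by (intro mult_left_mono mult_nonneg_nonneg) auto
  finally show ?thesis by (simp add: mult_ac)
qed

lemma entr_zero_deriv:
  fixes X Y :: "real \<Rightarrow> real"
  assumes dX: "(X has_real_derivative X') (at t)" and dY: "(Y has_real_derivative Y') (at t)"
    and X0: "X t = 0" and Y0: "Y t = 0"
  shows "((\<lambda>s. entr ((X s)\<^sup>2 + (Y s)\<^sup>2)) has_real_derivative 0) (at t)"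
proof -
  define P where "P s = (X s)\<^sup>2 + (Y s)\<^sup>2" for s
  have P0: "P t = 0" using X0 Y0 by (simp add: P_def)
  have cX: "(X \<longlongrightarrow> 0) (at t)" using DERIV_isCont[OF dX] X0 by (simp add: isCont_def)
  have cY: "(Y \<longlongrightarrow> 0) (at t)" using DERIV_isCont[OF dY] Y0 by (simp add: isCont_def)
  have cP: "(P \<longlongrightarrow> 0) (at t)" unfolding P_def using tendsto_add[OF tendsto_power[OF cX, of 2] tendsto_power[OF cY, of 2]] by simp
  have phi: "((\<lambda>s. sqrt (P s) * (\<bar>ln (P s)\<bar> + 1)) \<longlongrightarrow> 0) (at t)"
    by (rule phi_tendsto[OF cP]) (simp add: P_def)
  have qX: "((\<lambda>s. X s / (s - t)) \<longlongrightarrow> X') (at t)" using dX X0 by (simp add: has_field_derivative_iff)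
  have qY: "((\<lambda>s. Y s / (s - t)) \<longlongrightarrow> Y') (at t)" using dY Y0 by (simp add: has_field_derivative_iff)
  have lim: "((\<lambda>s. sqrt (P s) * (\<bar>ln (P s)\<bar> + 1) * (\<bar>X s / (s - t)\<bar> + \<bar>Y s / (s - t)\<bar>)) \<longlongrightarrow> 0) (at t)"
    using tendsto_mult[OF phi tendsto_add[OF tendsto_rabs[OF qX] tendsto_rabs[OF qY]]] by simp
  have "((\<lambda>s. (entr (P s) - entr (P t)) / (s - t)) \<longlongrightarrow> 0) (at t)"
  proof (rule Lim_null_comparison[OF _ lim], rule always_eventually, rule allI)
    fix s
    have b: "\<bar>entr (P s)\<bar> \<le> sqrt (P s) * (\<bar>ln (P s)\<bar> + 1) * (\<bar>X s\<bar> + \<bar>Y s\<bar>)"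
      by (rule entr_bound) (simp_all add: P_def sqrt_sum_le)
    have "norm ((entr (P s) - entr (P t)) / (s - t)) = \<bar>entr (P s)\<bar> / \<bar>s - t\<bar>"
      using P0 by (simp add: entr_def abs_divide)
    also have "\<dots> \<le> sqrt (P s) * (\<bar>ln (P s)\<bar> + 1) * (\<bar>X s\<bar> + \<bar>Y s\<bar>) / \<bar>s - t\<bar>"
      by (rule divide_right_mono[OF b]) simp
    also have "\<dots> = sqrt (P s) * (\<bar>ln (P s)\<bar> + 1) * (\<bar>X s / (s - t)\<bar> + \<bar>Y s / (s - t)\<bar>)"
      by (simp add: abs_divide add_divide_distrib[symmetric])
    finally show "norm ((entr (P s) - entr (P t)) / (s - t)) \<le> sqrt (P s) * (\<bar>ln (P s)\<bar> + 1) * (\<bar>X s / (s - t)\<bar> + \<bar>Y s / (s - t)\<bar>)" .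
  qed
  then show ?thesis unfolding P_def[abs_def] by (simp add: has_field_derivative_iff)
qed

lemma G_zero_deriv:
  fixes X Y X1 Y1 :: "real \<Rightarrow> real"
  assumes dX: "(X has_real_derivative X1 t) (at t)" and dY: "(Y has_real_derivative Y1 t) (at t)"
    and dX1: "(X1 has_real_derivative X2) (at t)" and dY1: "(Y1 has_real_derivative Y2) (at t)"
    and X0: "X t = 0" and Y0: "Y t = 0" and X10: "X1 t = 0" and Y10: "Y1 t = 0"
  shows "((\<lambda>s. - (ln ((X s)\<^sup>2 + (Y s)\<^sup>2) + 1) * (2 * (X s * X1 s + Y s * Y1 s))) has_real_derivative 0) (at t)"
proof -
  define P where "P s = (X s)\<^sup>2 + (Y s)\<^sup>2" for s
  define G where "G s = - (ln (P s) + 1) * (2 * (X s * X1 s + Y s * Y1 s))" for s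
  have G0: "G t = 0" using X0 Y0 by (simp add: G_def)
  have cX: "(X \<longlongrightarrow> 0) (at t)" using DERIV_isCont[OF dX] X0 by (simp add: isCont_def)
  have cY: "(Y \<longlongrightarrow> 0) (at t)" using DERIV_isCont[OF dY] Y0 by (simp add: isCont_def)
  have cP: "(P \<longlongrightarrow> 0) (at t)" unfolding P_def using tendsto_add[OF tendsto_power[OF cX, of 2] tendsto_power[OF cY, of 2]] by simp
  have phi: "((\<lambda>s. sqrt (P s) * (\<bar>ln (P s)\<bar> + 1)) \<longlongrightarrow> 0) (at t)"
    by (rule phi_tendsto[OF cP]) (simp add: P_def)
  have qX: "((\<lambda>s. X1 s / (s - t)) \<longlongrightarrow> X2) (at t)" using dX1 X10 by (simp add: has_field_derivative_iff)
  have qY: "((\<lambda>s. Y1 s / (s - t)) \<longlongrightarrow> Y2) (at t)" using dY1 Y10 by (simp add: has_field_derivative_iff)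
  have lim: "((\<lambda>s. 2 * (sqrt (P s) * (\<bar>ln (P s)\<bar> + 1)) * (\<bar>X1 s / (s - t)\<bar> + \<bar>Y1 s / (s - t)\<bar>)) \<longlongrightarrow> 0) (at t)"
    using tendsto_mult[OF tendsto_mult[OF tendsto_const[of 2] phi] tendsto_add[OF tendsto_rabs[OF qX] tendsto_rabs[OF qY]]] by simp
  have "((\<lambda>s. (G s - G t) / (s - t)) \<longlongrightarrow> 0) (at t)"
  proof (rule Lim_null_comparison[OF _ lim], rule always_eventually, rule allI)
    fix s
    define r where "r = sqrt (P s)"
    define a where "a = \<bar>ln (P s)\<bar> + 1"
    have a0: "a \<ge> 0" by (simp add: a_def)
    have rX: "\<bar>X s\<bar> \<le> r" and rY: "\<bar>Y s\<bar> \<le> r" unfolding r_def P_def by (rule abs_le_sqrt_sum)+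
    have "\<bar>G s\<bar> \<le> a * (2 * (\<bar>X s\<bar> * \<bar>X1 s\<bar> + \<bar>Y s\<bar> * \<bar>Y1 s\<bar>))"
      unfolding G_def a_def abs_mult abs_minus_cancel
      by (intro mult_mono) (auto simp: abs_mult intro!: abs_triangle_ineq[THEN order_trans])
    also have "\<dots> \<le> a * (2 * (r * \<bar>X1 s\<bar> + r * \<bar>Y1 s\<bar>))"
      using rX rY a0 by (intro mult_left_mono add_mono mult_right_mono) auto
    finally have b: "\<bar>G s\<bar> \<le> 2 * (r * a) * (\<bar>X1 s\<bar> + \<bar>Y1 s\<bar>)" by (simp add: algebra_simps)
    have "norm ((G s - G t) / (s - t)) = \<bar>G s\<bar> / \<bar>s - t\<bar>"
      using G0 by (simp add: abs_divide)
    also have "\<dots> \<le> 2 * (r * a) * (\<bar>X1 s\<bar> + \<bar>Y1 s\<bar>) / \<bar>s - t\<bar>"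
      by (rule divide_right_mono[OF b]) simp
    also have "\<dots> = 2 * (r * a) * (\<bar>X1 s / (s - t)\<bar> + \<bar>Y1 s / (s - t)\<bar>)"
      by (simp add: abs_divide add_divide_distrib[symmetric])
    finally show "norm ((G s - G t) / (s - t)) \<le> 2 * (sqrt (P s) * (\<bar>ln (P s)\<bar> + 1)) * (\<bar>X1 s / (s - t)\<bar> + \<bar>Y1 s / (s - t)\<bar>)"
      unfolding r_def a_def .
  qed
  then show ?thesis unfolding G_def[abs_def] P_def[abs_def] by (simp add: has_field_derivative_iff)
qed




lemma Re_cinner_sum: "Re (cinner x y) = (\<Sum>m\<in>UNIV. Re (x $ m) * Re (y $ m) + Im (x $ m) * Im (y $ m))"
  by (simp add: cinner_def Re_sum)

lemma cinner_proj_self: "Re (cinner z (proj u *v z)) = (Re (cinner z u))\<^sup>2 + (Im (cinner z u))\<^sup>2"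
proof -
  have "cinner z (proj u *v z) = cnj (cinner z u) * cinner z u"
    by (simp add: proj_mult cinner_scaleC_right cinner_commute)
  then show ?thesis by (simp add: power2_eq_square)
qed

lemma unit_derivs:
  fixes \<psi> \<psi>' \<psi>'' :: "real \<Rightarrow> complex ^ 'n"
  assumes d1: "\<And>t. (\<psi> has_vector_derivative \<psi>' t) (at t)"
      and d2: "\<And>t. (\<psi>' has_vector_derivative \<psi>'' t) (at t)"
      and unit: "\<And>t. cinner (\<psi> t) (\<psi> t) = 1"
  shows "Re (cinner (\<psi> l) (\<psi>' l)) = 0"
    and "Re (cinner (\<psi>' l) (\<psi>' l)) + Re (cinner (\<psi> l) (\<psi>'' l)) = 0"
proof -
  have c1: "((\<lambda>t. Re (\<psi> t $ m)) has_real_derivative Re (\<psi>' t $ m)) (at t)" for m t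
    using lin_deriv[OF linear_Re_comp d1] .
  have c2: "((\<lambda>t. Im (\<psi> t $ m)) has_real_derivative Im (\<psi>' t $ m)) (at t)" for m t
    using lin_deriv[OF linear_Im_comp d1] .
  have c3: "((\<lambda>t. Re (\<psi>' t $ m)) has_real_derivative Re (\<psi>'' t $ m)) (at t)" for m t
    using lin_deriv[OF linear_Re_comp d2] .
  have c4: "((\<lambda>t. Im (\<psi>' t $ m)) has_real_derivative Im (\<psi>'' t $ m)) (at t)" for m t
    using lin_deriv[OF linear_Im_comp d2] .
  have v1: "((\<lambda>t. \<psi> t $ m) has_vector_derivative \<psi>' t $ m) (at t)" for m t
    using bounded_linear.has_vector_derivative[OF bounded_linear_vec_nth d1] .
  have v2: "((\<lambda>t. \<psi>' t $ m) has_vector_derivative \<psi>'' t $ m) (at t)" for m t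
    using bounded_linear.has_vector_derivative[OF bounded_linear_vec_nth d2] .
  have R: "((\<lambda>t. Re (cinner (\<psi> t) (\<psi> t))) has_real_derivative 2 * Re (cinner (\<psi> t) (\<psi>' t))) (at t)" for t
    unfolding Re_cinner_sum sum_distrib_left
    by (rule DERIV_sum) (auto intro!: derivative_eq_intros c1 c2 v1 simp: algebra_simps)
  have Q0: "Re (cinner (\<psi> t) (\<psi>' t)) = 0" for t
  proof -
    have "((\<lambda>t. Re (cinner (\<psi> t) (\<psi> t))) has_real_derivative 0) (at t)"
      using unit by simp
    then show ?thesis using DERIV_unique[OF R] by fastforce
  qed
  then show "Re (cinner (\<psi> l) (\<psi>' l)) = 0" .
  have Q: "((\<lambda>t. Re (cinner (\<psi> t) (\<psi>' t))) has_real_derivative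
      Re (cinner (\<psi>' l) (\<psi>' l)) + Re (cinner (\<psi> l) (\<psi>'' l))) (at l)"
    unfolding Re_cinner_sum sum.distrib[symmetric]
    by (rule DERIV_sum) (auto intro!: derivative_eq_intros c1 c2 c3 c4 v1 v2 simp: algebra_simps)
  have "((\<lambda>t. Re (cinner (\<psi> t) (\<psi>' t))) has_real_derivative 0) (at l)"
    using Q0 by simp
  then show "Re (cinner (\<psi>' l) (\<psi>' l)) + Re (cinner (\<psi> l) (\<psi>'' l)) = 0"
    using DERIV_unique[OF Q] by fastforce
qed




theorem proposition2:
  fixes \<psi> \<psi>' \<psi>'' :: "real \<Rightarrow> complex ^ 'n"
    and l :: real
    and b :: "'n \<Rightarrow> complex ^ 'n"
  assumes d1: "\<And>t. (\<psi> has_vector_derivative \<psi>' t) (at t)"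
      and d2: "\<And>t. (\<psi>' has_vector_derivative \<psi>'' t) (at t)"
      and cont2: "continuous_on UNIV \<psi>''"
      and unit: "\<And>t. cinner (\<psi> t) (\<psi> t) = 1"
      and vperp_nz: "\<psi>' l - cinner (\<psi> l) (\<psi>' l) *s \<psi> l \<noteq> 0"
      and onb: "orthonormal_basis b"
      and plus: "\<exists>i. b i = (1 / sqrt 2) *\<^sub>R (\<psi> l + (1 / sqrt (Re (cinner
                    (\<psi>' l - cinner (\<psi> l) (\<psi>' l) *s \<psi> l)
                    (\<psi>' l - cinner (\<psi> l) (\<psi>' l) *s \<psi> l)))) *\<^sub>R
                    (\<psi>' l - cinner (\<psi> l) (\<psi>' l) *s \<psi> l))"
      and minus: "\<exists>j. b j = (1 / sqrt 2) *\<^sub>R (\<psi> l - (1 / sqrt (Re (cinner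
                    (\<psi>' l - cinner (\<psi> l) (\<psi>' l) *s \<psi> l)
                    (\<psi>' l - cinner (\<psi> l) (\<psi>' l) *s \<psi> l)))) *\<^sub>R
                    (\<psi>' l - cinner (\<psi> l) (\<psi>' l) *s \<psi> l))"
  shows "\<exists>D. (\<forall>\<^sub>F \<delta> in nhds 0.
              ((\<lambda>d. coh b (proj (\<psi> (l + d)))) has_real_derivative D \<delta>) (at \<delta>))
           \<and> (D has_real_derivative (- 4 * fubini_study (\<psi> l) (\<psi>' l))) (at 0)"
proof -
  define \<psi>0 where "\<psi>0 = \<psi> l"
  define v where "v = \<psi>' l"
  define a where "a = cinner \<psi>0 v"
  define w where "w = v - a *s \<psi>0"
  define n where "n = sqrt (Re (cinner w w))"
  obtain i where bi: "b i = (1 / sqrt 2) *\<^sub>R (\<psi>0 + (1 / n) *\<^sub>R w)"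
    using plus unfolding \<psi>0_def[symmetric] v_def[symmetric] a_def[symmetric] w_def[symmetric] n_def[symmetric] by blast
  obtain j where bj: "b j = (1 / sqrt 2) *\<^sub>R (\<psi>0 - (1 / n) *\<^sub>R w)"
    using minus unfolding \<psi>0_def[symmetric] v_def[symmetric] a_def[symmetric] w_def[symmetric] n_def[symmetric] by blast
  have w0: "w \<noteq> 0" using vperp_nz unfolding w_def a_def v_def \<psi>0_def .
  have ww_real: "cinner w w = complex_of_real (Re (cinner w w))"
    by (simp add: complex_eq_iff)
  have wwpos: "Re (cinner w w) > 0"
    using w0 cinner_self_nonneg[of w] cinner_self_eq_0[of w] ww_real by (metis less_eq_real_def of_real_0)
  have npos: "n > 0" unfolding n_def using wwpos by simp
  have n2: "n\<^sup>2 = Re (cinner w w)" unfolding n_def using wwpos by simp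
  have ww: "cinner w w = complex_of_real (n\<^sup>2)" using ww_real n2 by simp
  have psi00: "cinner \<psi>0 \<psi>0 = 1" unfolding \<psi>0_def by (rule unit)
  have Rea: "Re a = 0" unfolding a_def \<psi>0_def v_def using unit_derivs(1)[OF d1 d2 unit] .
  have Rsecond: "Re (cinner v v) + Re (cinner \<psi>0 (\<psi>'' l)) = 0"
    unfolding v_def \<psi>0_def using unit_derivs(2)[OF d1 d2 unit] .
  have wpsi: "cinner w \<psi>0 = 0"
    unfolding w_def using psi00 by (simp add: cinner_diff_left cinner_scaleC_left a_def cinner_commute)
  have psiw: "cinner \<psi>0 w = 0"
    unfolding w_def using psi00 by (simp add: cinner_diff_right cinner_scaleC_right a_def)
  have vdec: "v = w + a *s \<psi>0" unfolding w_def by simp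
  have wv: "cinner w v = complex_of_real (n\<^sup>2)"
    unfolding vdec using ww wpsi by (simp add: cinner_add_right cinner_scaleC_right)
  have vv: "Re (cinner v v) = (Im a)\<^sup>2 + n\<^sup>2"
  proof -
    have "cinner v v = cinner w w + cnj a * a"
      unfolding vdec using wpsi psiw psi00
      by (simp add: cinner_add_right cinner_add_left cinner_scaleC_right cinner_scaleC_left)
    then show ?thesis using ww Rea by (simp add: power2_eq_square)
  qed
  have fs: "fubini_study (\<psi> l) (\<psi>' l) = n\<^sup>2"
  proof -
    have "cinner v \<psi>0 = cnj a" unfolding a_def by (simp add: cinner_commute)
    then have "(cmod (cinner v \<psi>0))\<^sup>2 = (Im a)\<^sup>2" using Rea by (simp add: cmod_power2)
    then show ?thesis unfolding fubini_study_def \<psi>0_def[symmetric] v_def[symmetric] using vv by simp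
  qed
  have expand_i: "cinner (b i) z = complex_of_real (1 / sqrt 2) * (cinner \<psi>0 z + complex_of_real (1 / n) * cinner w z)" for z
    unfolding bi by (simp add: cinner_scaleR_left cinner_add_left)
  have expand_j: "cinner (b j) z = complex_of_real (1 / sqrt 2) * (cinner \<psi>0 z - complex_of_real (1 / n) * cinner w z)" for z
    unfolding bj by (simp add: cinner_scaleR_left cinner_diff_left)
  have expand_ki: "cinner z (b i) = complex_of_real (1 / sqrt 2) * (cinner z \<psi>0 + complex_of_real (1 / n) * cinner z w)" for z
    unfolding bi by (simp add: cinner_scaleR_right cinner_add_right)
  have expand_kj: "cinner z (b j) = complex_of_real (1 / sqrt 2) * (cinner z \<psi>0 - complex_of_real (1 / n) * cinner z w)" for z
    unfolding bj by (simp add: cinner_scaleR_right cinner_diff_right)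
  have ij: "i \<noteq> j"
  proof
    assume "i = j"
    then have "cinner (b i) w = cinner (b j) w" by simp
    then have "complex_of_real (1 / n) * cinner w w = - complex_of_real (1 / n) * cinner w w"
      unfolding expand_i expand_j using psiw by simp
    then show False using npos ww by simp
  qed
  have other: "cinner (b k) \<psi>0 = 0 \<and> cinner (b k) w = 0" if "k \<noteq> i" "k \<noteq> j" for k
  proof -
    have "cinner (b k) (b i) = 0" "cinner (b k) (b j) = 0"
      using onb that unfolding orthonormal_basis_def by auto
    then have A: "cinner (b k) \<psi>0 + complex_of_real (1 / n) * cinner (b k) w = 0"
      and B: "cinner (b k) \<psi>0 - complex_of_real (1 / n) * cinner (b k) w = 0"
      unfolding expand_ki expand_kj by simp_all
    from A B have "cinner (b k) \<psi>0 = 0" by (simp add: algebra_simps)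
    moreover from A B have "complex_of_real (1 / n) * cinner (b k) w = 0" by (simp add: algebra_simps)
    then have "cinner (b k) w = 0" using npos by simp
    ultimately show ?thesis by simp
  qed
  have other_v: "cinner (b k) v = 0" if "k \<noteq> i" "k \<noteq> j" for k
    using other[OF that] unfolding vdec by (simp add: cinner_add_right cinner_scaleC_right)
  have i0: "cinner (b i) \<psi>0 = complex_of_real (1 / sqrt 2)"
    unfolding expand_i using psi00 wpsi by simp
  have j0: "cinner (b j) \<psi>0 = complex_of_real (1 / sqrt 2)"
    unfolding expand_j using psi00 wpsi by simp
  have i1: "cinner (b i) v = complex_of_real (1 / sqrt 2) * (a + complex_of_real n)"
    unfolding expand_i wv a_def[symmetric] using npos by (simp add: power2_eq_square)
  have j1: "cinner (b j) v = complex_of_real (1 / sqrt 2) * (a - complex_of_real n)"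
    unfolding expand_j wv a_def[symmetric] using npos by (simp add: power2_eq_square)
  have ij2: "cinner (b i) z + cinner (b j) z = complex_of_real (sqrt 2) * cinner \<psi>0 z" for z
  proof -
    have s2: "(2::complex) / complex_of_real (sqrt 2) = complex_of_real (sqrt 2)"
      by (metis of_real_divide of_real_numeral real_div_sqrt zero_le_numeral)
    show ?thesis unfolding expand_i expand_j by (simp add: algebra_simps) (metis s2 times_divide_eq_right)
  qed
  define X where "X = (\<lambda>k t. Re (cinner (b k) (\<psi> t)))"
  define Y where "Y = (\<lambda>k t. Im (cinner (b k) (\<psi> t)))"
  define X1 where "X1 = (\<lambda>k t. Re (cinner (b k) (\<psi>' t)))"
  define Y1 where "Y1 = (\<lambda>k t. Im (cinner (b k) (\<psi>' t)))"
  define X2 where "X2 = (\<lambda>k t. Re (cinner (b k) (\<psi>'' t)))"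
  define Y2 where "Y2 = (\<lambda>k t. Im (cinner (b k) (\<psi>'' t)))"
  define P where "P = (\<lambda>k t. (X k t)\<^sup>2 + (Y k t)\<^sup>2)"
  define P1 where "P1 = (\<lambda>k t. 2 * (X k t * X1 k t + Y k t * Y1 k t))"
  define P2 where "P2 = (\<lambda>k t. 2 * ((X1 k t)\<^sup>2 + X k t * X2 k t + (Y1 k t)\<^sup>2 + Y k t * Y2 k t))"
  define G where "G = (\<lambda>k t. - (ln (P k t) + 1) * P1 k t)"
  have dX: "(X k has_real_derivative X1 k t) (at t)" for k t
    unfolding X_def X1_def using lin_deriv[OF linear_Re_cinner d1] .
  have dY: "(Y k has_real_derivative Y1 k t) (at t)" for k t
    unfolding Y_def Y1_def using lin_deriv[OF linear_Im_cinner d1] .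
  have dX1: "(X1 k has_real_derivative X2 k t) (at t)" for k t
    unfolding X1_def X2_def using lin_deriv[OF linear_Re_cinner d2] .
  have dY1: "(Y1 k has_real_derivative Y2 k t) (at t)" for k t
    unfolding Y1_def Y2_def using lin_deriv[OF linear_Im_cinner d2] .
  have dP: "(P k has_real_derivative P1 k t) (at t)" for k t
    unfolding P_def P1_def by (auto intro!: derivative_eq_intros dX dY simp: algebra_simps)
  have dP1: "(P1 k has_real_derivative P2 k t) (at t)" for k t
    unfolding P1_def P2_def by (auto intro!: derivative_eq_intros dX dY dX1 dY1 simp: algebra_simps power2_eq_square)
  have Pnn: "P k t \<ge> 0" for k t unfolding P_def by simp
  have coh_eq: "coh b (proj (\<psi> t)) = (\<Sum>k\<in>UNIV. entr (P k t))" for t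
    unfolding coh_def shannon_in_basis_def vn_pure[OF unit onb] cinner_proj_self P_def X_def Y_def by simp
  have dE: "((\<lambda>s. \<Sum>k\<in>UNIV. entr (P k s)) has_real_derivative (\<Sum>k\<in>UNIV. G k t)) (at t)" for t
  proof (rule DERIV_sum)
    fix k :: 'n
    show "((\<lambda>s. entr (P k s)) has_real_derivative G k t) (at t)"
    proof (cases "P k t = 0")
      case True
      then have "X k t = 0" "Y k t = 0" unfolding P_def by (simp_all add: sum_power2_eq_zero_iff)
      then have "((\<lambda>s. entr ((X k s)\<^sup>2 + (Y k s)\<^sup>2)) has_real_derivative 0) (at t)"
        using entr_zero_deriv[OF dX dY] by simp
      moreover have "G k t = 0" unfolding G_def P1_def using \<open>X k t = 0\<close> \<open>Y k t = 0\<close> by simp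
      ultimately show ?thesis unfolding P_def by simp
    next
      case False
      then have pos: "P k t > 0" using Pnn[of k t] by simp
      show ?thesis unfolding entr_def G_def
        using pos by (auto intro!: derivative_eq_intros dP simp: field_simps)
    qed
  qed
  define D where "D = (\<lambda>\<delta>. \<Sum>k\<in>UNIV. G k (l + \<delta>))"
  have part1: "((\<lambda>d. coh b (proj (\<psi> (l + d)))) has_real_derivative D \<delta>) (at \<delta>)" for \<delta>
  proof -
    have "((\<lambda>d. \<Sum>k\<in>UNIV. entr (P k (d + l))) has_real_derivative (\<Sum>k\<in>UNIV. G k (\<delta> + l))) (at \<delta>)"
      using DERIV_shift[of "\<lambda>s. \<Sum>k\<in>UNIV. entr (P k s)" "\<Sum>k\<in>UNIV. G k (\<delta> + l)" \<delta> l] dE by simp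
    then show ?thesis unfolding coh_eq D_def by (simp add: add.commute)
  qed
  have s2: "(1 / sqrt 2)\<^sup>2 = (1/2::real)" by (simp add: power_divide)
  have Xi: "X i l = 1 / sqrt 2" "Y i l = 0" "X j l = 1 / sqrt 2" "Y j l = 0"
    unfolding X_def Y_def \<psi>0_def[symmetric] i0 j0 by simp_all
  have Xi1: "X1 i l = n / sqrt 2" "X1 j l = - n / sqrt 2" "Y1 i l = Im a / sqrt 2" "Y1 j l = Im a / sqrt 2"
    unfolding X1_def Y1_def v_def[symmetric] i1 j1 using Rea by simp_all
  have Pi: "P i l = 1/2" "P j l = 1/2" unfolding P_def using Xi s2 by simp_all
  have P1i: "P1 i l = n" "P1 j l = - n" unfolding P1_def using Xi Xi1 by simp_all
  have X2sum: "X2 i l + X2 j l = sqrt 2 * Re (cinner \<psi>0 (\<psi>'' l))"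
  proof -
    have "X2 i l + X2 j l = Re (cinner (b i) (\<psi>'' l) + cinner (b j) (\<psi>'' l))" unfolding X2_def by simp
    also have "\<dots> = sqrt 2 * Re (cinner \<psi>0 (\<psi>'' l))" unfolding ij2 by simp
    finally show ?thesis .
  qed
  have P2sum: "P2 i l + P2 j l = 0"
  proof -
    have "P2 i l + P2 j l = 2 * (n\<^sup>2 + (Im a)\<^sup>2) + 2 * (1 / sqrt 2) * (X2 i l + X2 j l)"
      unfolding P2_def Xi Xi1 by (simp add: power_divide algebra_simps) (simp add: add_divide_distrib)
    also have "\<dots> = 2 * (n\<^sup>2 + (Im a)\<^sup>2) + 2 * Re (cinner \<psi>0 (\<psi>'' l))"
      unfolding X2sum by simp
    finally show ?thesis using Rsecond vv by simp
  qed
  define Gd where "Gd = (\<lambda>k. if k = i \<or> k = j then - (P1 k l / P k l) * P1 k l - (ln (P k l) + 1) * P2 k l else 0)"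
  have dG: "(G k has_real_derivative Gd k) (at l)" for k
  proof (cases "k = i \<or> k = j")
    case True
    then have pos: "P k l > 0" using Pi by auto
    show ?thesis unfolding G_def Gd_def using True pos
      by (auto intro!: derivative_eq_intros dP dP1 simp: field_simps)
  next
    case False
    then have ki: "k \<noteq> i" "k \<noteq> j" by auto
    have z: "X k l = 0" "Y k l = 0" "X1 k l = 0" "Y1 k l = 0"
      unfolding X_def Y_def X1_def Y1_def \<psi>0_def[symmetric] v_def[symmetric]
      using other[OF ki] other_v[OF ki] by simp_all
    have "((\<lambda>s. - (ln ((X k s)\<^sup>2 + (Y k s)\<^sup>2) + 1) * (2 * (X k s * X1 k s + Y k s * Y1 k s))) has_real_derivative 0) (at l)"
      by (rule G_zero_deriv[OF dX dY dX1 dY1 z])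
    then show ?thesis unfolding G_def Gd_def P_def P1_def using False by simp
  qed
  have sumG: "(\<Sum>k\<in>UNIV. Gd k) = - 4 * n\<^sup>2"
  proof -
    have "(\<Sum>k\<in>UNIV. Gd k) = (\<Sum>k\<in>{i, j}. Gd k)"
      by (rule sum.mono_neutral_right) (auto simp: Gd_def)
    also have "\<dots> = Gd i + Gd j" using ij by simp
    also have "\<dots> = - 4 * n\<^sup>2 - (ln (1/2) + 1) * (P2 i l + P2 j l)"
      unfolding Gd_def Pi P1i by (simp add: algebra_simps power2_eq_square)
    finally show ?thesis using P2sum by simp
  qed
  have "((\<lambda>t. \<Sum>k\<in>UNIV. G k t) has_real_derivative - 4 * n\<^sup>2) (at l)"
    using DERIV_sum[of UNIV "\<lambda>t k. G k t" Gd, OF dG] sumG by simp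
  then have "((\<lambda>d. \<Sum>k\<in>UNIV. G k (d + l)) has_real_derivative - 4 * n\<^sup>2) (at 0)"
    using DERIV_shift[of "\<lambda>t. \<Sum>k\<in>UNIV. G k t" "- 4 * n\<^sup>2" 0 l] by simp
  then have part2: "(D has_real_derivative (- 4 * fubini_study (\<psi> l) (\<psi>' l))) (at 0)"
    unfolding D_def fs by (simp add: add.commute)
  show ?thesis using part1 part2 by (intro exI[of _ D] conjI always_eventually allI) auto
qed



end
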